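(* Let $\mathcal V$ be a finite set, let $P_h$ and $\pi$ be probability distributions on $\mathcal V$, and set $q := 1-\max_{x\in\mathcal V}P_h(x)$. Then: (i) For every subset $A\subseteq\mathcal V$, $$\pi(A)-P_h(A)\;\le\;\sup\Bigl\{\lambda\in[0,1]:\ d_{\mathrm{kl}}(\lambda\,\|\,q)\le D_{\mathrm{KL}}(\pi\,\|\,P_h)\Bigr\}.$$ (ii) For every fixed $C\ge 0$, $$\lim_{q\to 0}\ \sup_{\pi:\,D_{\mathrm{KL}}(\pi\|P_h)\le C}\ \sup_{A\subseteq\mathcal V}\bigl(\pi(A)-P_h(A)\bigr)=0,$$ in the uniform sense: for every $\varepsilon>0$ there is $\eta>0$ such that for every distribution $P_h$ on $\mathcal V$ with $1-\max_{x}P_h(x)<\eta$, every distribution $\pi$ on $\mathcal V$ with $D_{\mathrm{KL}}(\pi\|P_h)\le C$, and every $A\subseteq\mathcal V$, one has $\pi(A)-P_h(A)\le\varepsilon$.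
   Context: For distributions on a finite set, $\pi(A)=\sum_{x\in A}\pi(x)$ and $D_{\mathrm{KL}}(\pi\|P_h)=\sum_x \pi(x)\log\frac{\pi(x)}{P_h(x)}\in[0,+\infty]$. The binary KL divergence is $d_{\mathrm{kl}}(p\|q):=p\log\frac{p}{q}+(1-p)\log\frac{1-p}{1-q}$ for $p,q\in[0,1]$, with the conventions $0\log(0/q):=0$ for $q\in[0,1]$ (including $0\log(0/0)=0$) and $b\log(b/0):=+\infty$ for $b>0$. (In the paper, $P_h=P_h(\cdot\mid h_t)$ is a human-like next-token distribution given a history $h_t$, $\pi=\pi_\theta(\cdot\mid h_t)$ is a policy's next-token distribution, and $q$ is called the local capacity mass.) *)

theory Defs
  imports "HOL-Analysis.Analysis"
begin

definition is_dist :: "'a set \<Rightarrow> ('a \<Rightarrow> real) \<Rightarrow> bool" where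
  "is_dist V p \<longleftrightarrow> (\<forall>x\<in>V. 0 \<le> p x) \<and> (\<Sum>x\<in>V. p x) = 1"

definition xlogxy :: "real \<Rightarrow> real \<Rightarrow> ereal" where
  "xlogxy b c = (if b = 0 then 0 else if c = 0 then \<infinity> else ereal (b * ln (b / c)))"

definition KL :: "'a set \<Rightarrow> ('a \<Rightarrow> real) \<Rightarrow> ('a \<Rightarrow> real) \<Rightarrow> ereal" where
  "KL V \<pi> P = (\<Sum>x\<in>V. xlogxy (\<pi> x) (P x))"

definition dkl :: "real \<Rightarrow> real \<Rightarrow> ereal" where
  "dkl p q = xlogxy p q + xlogxy (1 - p) (1 - q)"

end

theory Submission
  imports Defs
begin

lemma ln_ge_1m: "(x::real) > 0 \<Longrightarrow> ln x \<ge> 1 - 1/x"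
proof -
  assume x: "x > 0"
  have "ln (1/x) \<le> 1/x - 1" using x by (intro ln_le_minus_one) simp
  moreover have "ln (1/x) = - ln x" using x by (simp add: ln_div)
  ultimately show ?thesis by simp
qed

lemma xlog_anti:
  assumes "0 \<le> a" "0 \<le> b" "b \<le> c"
  shows "xlogxy a c \<le> xlogxy a b"
proof (cases "a = 0")
  case True then show ?thesis by (simp add: xlogxy_def)
next
  case False
  show ?thesis
  proof (cases "b = 0")
    case True then show ?thesis using False by (simp add: xlogxy_def)
  next
    case b: False
    have "ln (a/c) \<le> ln (a/b)" using assms False b
      by (simp add: ln_div)
    then have "a * ln (a/c) \<le> a * ln (a/b)" using assms by (simp add: mult_left_mono)
    then show ?thesis using False b assms by (simp add: xlogxy_def)
  qed
qed

lemma xlog_notminf: "xlogxy a b \<noteq> -\<infinity>"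
  by (simp add: xlogxy_def)

lemma xlog_pair:
  assumes "0 \<le> a1" "0 \<le> a2" "0 \<le> b1" "0 \<le> b2"
  shows "xlogxy (a1+a2) (b1+b2) \<le> xlogxy a1 b1 + xlogxy a2 b2"
proof (cases "xlogxy a1 b1 = \<infinity> \<or> xlogxy a2 b2 = \<infinity>")
  case True then show ?thesis using xlog_notminf[of a1 b1] xlog_notminf[of a2 b2] by auto
next
  case False
  then have h1: "a1 = 0 \<or> b1 > 0" and h2: "a2 = 0 \<or> b2 > 0" using assms
    by (auto simp: xlogxy_def split: if_splits)
  show ?thesis
  proof (cases "a1 = 0")
    case True
    then show ?thesis using xlog_anti[of a2 b2 "b1+b2"] assms by (simp add: xlogxy_def)
  next
    case a1: False
    show ?thesis
    proof (cases "a2 = 0")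
      case True
      then show ?thesis using xlog_anti[of a1 b1 "b1+b2"] assms by (simp add: xlogxy_def)
    next
      case a2: False
      have p1: "a1 > 0" "b1 > 0" "a2 > 0" "b2 > 0" using a1 a2 h1 h2 assms by auto
      define A where "A = a1 + a2"
      define B where "B = b1 + b2"
      have AB: "A > 0" "B > 0" using p1 by (auto simp: A_def B_def)
      have e1: "a1 * ln (a1/b1) - a1 * ln (A/B) = a1 * ln (a1*B/(b1*A))"
        using p1 AB by (simp add: ln_div ln_mult algebra_simps)
      have e2: "a2 * ln (a2/b2) - a2 * ln (A/B) = a2 * ln (a2*B/(b2*A))"
        using p1 AB by (simp add: ln_div ln_mult algebra_simps)
      have i1: "a1 * ln (a1*B/(b1*A)) \<ge> a1 * (1 - b1*A/(a1*B))"
        using ln_ge_1m[of "a1*B/(b1*A)"] p1 AB by (intro mult_left_mono) auto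
      have i2: "a2 * ln (a2*B/(b2*A)) \<ge> a2 * (1 - b2*A/(a2*B))"
        using ln_ge_1m[of "a2*B/(b2*A)"] p1 AB by (intro mult_left_mono) auto
      have s1: "a1 * (1 - b1*A/(a1*B)) = a1 - b1*A/B" using p1 AB by (simp add: field_simps)
      have s2: "a2 * (1 - b2*A/(a2*B)) = a2 - b2*A/B" using p1 AB by (simp add: field_simps)
      have "b1*A/B + b2*A/B = B*A/B" unfolding B_def by (simp add: add_divide_distrib distrib_right)
      then have s3: "b1*A/B + b2*A/B = A" using AB by simp
      have s: "a1 * (1 - b1*A/(a1*B)) + a2 * (1 - b2*A/(a2*B)) = 0"
        using s1 s2 s3 unfolding A_def by linarith
      have "A * ln (A/B) \<le> a1 * ln (a1/b1) + a2 * ln (a2/b2)"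
      proof -
        have "A * ln (A/B) = a1 * ln (A/B) + a2 * ln (A/B)" by (simp add: A_def distrib_right)
        then show ?thesis using e1 e2 i1 i2 s by linarith
      qed
      then show ?thesis using p1 AB unfolding A_def B_def by (simp add: xlogxy_def)
    qed
  qed
qed

lemma logsum:
  assumes "finite S" "\<forall>x\<in>S. 0 \<le> \<pi> x \<and> 0 \<le> P x"
  shows "xlogxy (sum \<pi> S) (sum P S) \<le> (\<Sum>x\<in>S. xlogxy (\<pi> x) (P x))"
  using assms
proof (induction S rule: finite_induct)
  case empty then show ?case by (simp add: xlogxy_def)
next
  case (insert x F)
  have "xlogxy (sum \<pi> (insert x F)) (sum P (insert x F))
      = xlogxy (\<pi> x + sum \<pi> F) (P x + sum P F)" using insert by simp
  also have "\<dots> \<le> xlogxy (\<pi> x) (P x) + xlogxy (sum \<pi> F) (sum P F)"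
    using insert by (intro xlog_pair) (auto intro: sum_nonneg)
  also have "\<dots> \<le> xlogxy (\<pi> x) (P x) + (\<Sum>x\<in>F. xlogxy (\<pi> x) (P x))"
    using insert by (intro add_left_mono) auto
  also have "\<dots> = (\<Sum>x\<in>insert x F. xlogxy (\<pi> x) (P x))" using insert by simp
  finally show ?case .
qed

lemma dkl_le_KL:
  assumes "finite V" "is_dist V P" "is_dist V \<pi>" "A \<subseteq> V"
  shows "dkl (sum \<pi> A) (sum P A) \<le> KL V \<pi> P"
proof -
  have fA: "finite A" "finite (V - A)" using assms finite_subset by auto
  have nn: "\<forall>x\<in>A. 0 \<le> \<pi> x \<and> 0 \<le> P x" "\<forall>x\<in>V-A. 0 \<le> \<pi> x \<and> 0 \<le> P x"
    using assms unfolding is_dist_def by auto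
  have c1: "sum \<pi> (V - A) = 1 - sum \<pi> A" "sum P (V - A) = 1 - sum P A"
    using assms sum_diff[OF assms(1) assms(4), of \<pi>] sum_diff[OF assms(1) assms(4), of P]
    unfolding is_dist_def by auto
  have "KL V \<pi> P = (\<Sum>x\<in>A. xlogxy (\<pi> x) (P x)) + (\<Sum>x\<in>V-A. xlogxy (\<pi> x) (P x))"
    unfolding KL_def using sum.subset_diff[of A V] assms by (simp add: add.commute)
  moreover have "xlogxy (sum \<pi> A) (sum P A) \<le> (\<Sum>x\<in>A. xlogxy (\<pi> x) (P x))"
    using logsum fA nn by blast
  moreover have "xlogxy (1 - sum \<pi> A) (1 - sum P A) \<le> (\<Sum>x\<in>V-A. xlogxy (\<pi> x) (P x))"
    using logsum[OF fA(2) nn(2)] c1 by simp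
  ultimately show ?thesis unfolding dkl_def by (simp add: add_mono)
qed

lemma key:
  assumes "finite V" "is_dist V P" "is_dist V \<pi>" "A \<subseteq> V"
  obtains "sum \<pi> A - sum P A \<le> 1 - Max (P ` V)"
  | "sum P A \<le> 1 - Max (P ` V)"
proof -
  have ne: "V \<noteq> {}" using assms unfolding is_dist_def by auto
  have "Max (P ` V) \<in> P ` V" using ne assms(1) by (intro Max_in) auto
  then obtain m where m: "m \<in> V" "Max (P ` V) = P m" by auto
  have nn: "\<forall>x\<in>V. 0 \<le> P x" "\<forall>x\<in>V. 0 \<le> \<pi> x" using assms unfolding is_dist_def by auto
  have s1: "sum P V = 1" "sum \<pi> V = 1" using assms unfolding is_dist_def by auto
  show ?thesis
  proof (cases "m \<in> A")
    case True
    have "P m \<le> sum P A" using True nn assms(1,4) finite_subset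
      by (intro member_le_sum) auto
    moreover have "sum \<pi> A \<le> 1" using s1 nn assms(1,4) sum_mono2[of V A \<pi>] by auto
    ultimately show ?thesis using that m by linarith
  next
    case False
    have "sum P A \<le> sum P (V - {m})" using False assms nn
      by (intro sum_mono2) auto
    also have "\<dots> = 1 - P m" using sum_diff1[of V P m] m s1 assms(1) by simp
    finally show ?thesis using that m by linarith
  qed
qed

lemma basic:
  assumes "is_dist V P" "A \<subseteq> V" "finite V"
  shows "0 \<le> sum P A" "sum P A \<le> 1"
proof -
  have nn: "\<forall>x\<in>V. 0 \<le> P x" using assms unfolding is_dist_def by auto
  show "0 \<le> sum P A" using nn assms by (intro sum_nonneg) auto
  show "sum P A \<le> 1" using nn assms sum_mono2[of V A P] unfolding is_dist_def by auto
qed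

lemma q_range:
  assumes "finite V" "is_dist V P"
  shows "0 \<le> 1 - Max (P ` V)" "1 - Max (P ` V) \<le> 1"
proof -
  have ne: "V \<noteq> {}" using assms unfolding is_dist_def by auto
  have "Max (P ` V) \<in> P ` V" using ne assms(1) by (intro Max_in) auto
  then obtain m where m: "m \<in> V" "Max (P ` V) = P m" by auto
  have "P m \<le> sum P V" using assms m unfolding is_dist_def by (intro member_le_sum) auto
  then show "0 \<le> 1 - Max (P ` V)" using m assms unfolding is_dist_def by auto
  show "1 - Max (P ` V) \<le> 1" using m assms unfolding is_dist_def by auto
qed

lemma dkl_anti:
  assumes "0 \<le> b" "b \<le> q" "q < a" "a \<le> 1"
  shows "dkl a q \<le> dkl a b"
proof (cases "b = 0")
  case True
  then have "xlogxy a b = \<infinity>" using assms by (simp add: xlogxy_def)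
  then have "dkl a b = \<infinity>" unfolding dkl_def using xlog_notminf[of "1-a" "1-b"] by simp
  then show ?thesis by simp
next
  case False
  then have bp: "b > 0" "q > 0" "a > 0" using assms by auto
  show ?thesis
  proof (cases "a = 1")
    case True
    have "ln (1/q) \<le> ln (1/b)" using bp assms by (simp add: ln_div)
    then show ?thesis using True bp by (simp add: dkl_def xlogxy_def)
  next
    case a1: False
    then have a1: "a < 1" using assms by simp
    have i1: "a * ln (q/b) \<ge> a * (1 - b/q)"
      using ln_ge_1m[of "q/b"] bp by (intro mult_left_mono) auto
    have i2: "(1-a) * ln ((1-q)/(1-b)) \<ge> (1-a) * (1 - (1-b)/(1-q))"
      using ln_ge_1m[of "(1-q)/(1-b)"] bp assms a1 by (intro mult_left_mono) auto
    have e1: "a * (1 - b/q) = (q - b) * (a/q)" using bp by (simp add: field_simps)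
    have e2: "(1-a) * (1 - (1-b)/(1-q)) = - ((q - b) * ((1-a)/(1-q)))"
      using assms a1 by (simp add: field_simps)
    have "a/q \<ge> 1" using bp assms by simp
    moreover have "(1-a)/(1-q) \<le> 1" using assms a1 by simp
    ultimately have "(1-a)/(1-q) \<le> a/q" by linarith
    then have "(q - b) * ((1-a)/(1-q)) \<le> (q - b) * (a/q)"
      using assms by (intro mult_left_mono) auto
    then have main: "a * ln (q/b) + (1-a) * ln ((1-q)/(1-b)) \<ge> 0" using i1 i2 e1 e2 by linarith
    have l1: "a * ln (a/b) = a * ln (a/q) + a * ln (q/b)" using bp by (simp add: ln_div algebra_simps)
    have l2: "(1-a) * ln ((1-a)/(1-b)) = (1-a) * ln ((1-a)/(1-q)) + (1-a) * ln ((1-q)/(1-b))"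
      using assms a1 by (simp add: ln_div algebra_simps)
    show ?thesis using main l1 l2 bp a1 assms by (simp add: dkl_def xlogxy_def)
  qed
qed

theorem theorem1:
  fixes V :: "'a set" and P \<pi> :: "'a \<Rightarrow> real"
  assumes "finite V"
    and "is_dist V P" and "is_dist V \<pi>"
  shows "(\<forall>A. A \<subseteq> V \<longrightarrow>
            sum \<pi> A - sum P A \<le>
              Sup {l. 0 \<le> l \<and> l \<le> 1 \<and>
                     dkl l (1 - Max (P ` V)) \<le> KL V \<pi> P})
       \<and> (\<forall>C::real. C \<ge> 0 \<longrightarrow> (\<forall>\<epsilon>>0. \<exists>\<eta>>0. \<forall>Q \<rho> A.
            is_dist V Q \<and> 1 - Max (Q ` V) < \<eta> \<and> is_dist V \<rho> \<and>
            KL V \<rho> Q \<le> ereal C \<and> A \<subseteq> V \<longrightarrow>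
            sum \<rho> A - sum Q A \<le> \<epsilon>))"
proof (intro conjI allI impI)
  fix A assume AV: "A \<subseteq> V"
  define q where "q = 1 - Max (P ` V)"
  define S where "S = {l. 0 \<le> l \<and> l \<le> 1 \<and> dkl l q \<le> KL V \<pi> P}"
  have q01: "0 \<le> q" "q \<le> 1" using q_range[OF assms(1,2)] q_def by auto
  have "xlogxy (sum \<pi> V) (sum P V) \<le> KL V \<pi> P"
    unfolding KL_def using assms by (intro logsum) (auto simp: is_dist_def)
  then have KL0: "0 \<le> KL V \<pi> P" using assms by (simp add: is_dist_def xlogxy_def zero_ereal_def)
  have "dkl q q = 0" by (simp add: dkl_def xlogxy_def)
  then have qS: "q \<in> S" using q01 KL0 S_def by simp
  have bdd: "bdd_above S" unfolding S_def by (intro bdd_aboveI[of _ 1]) auto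
  have qSup: "q \<le> Sup S" using cSup_upper[OF qS bdd] .
  have ab: "0 \<le> sum \<pi> A" "sum \<pi> A \<le> 1" "0 \<le> sum P A" "sum P A \<le> 1"
    using basic[OF assms(3) AV assms(1)] basic[OF assms(2) AV assms(1)] by auto
  have "sum \<pi> A - sum P A \<le> Sup S"
  proof (rule key[OF assms(1,2,3) AV])
    assume "sum \<pi> A - sum P A \<le> 1 - Max (P ` V)"
    then show ?thesis using qSup q_def by simp
  next
    assume bq: "sum P A \<le> 1 - Max (P ` V)"
    show ?thesis
    proof (cases "sum \<pi> A \<le> q")
      case True then show ?thesis using qSup ab by linarith
    next
      case False
      have "dkl (sum \<pi> A) q \<le> dkl (sum \<pi> A) (sum P A)"
        using bq q_def ab False by (intro dkl_anti) auto
      also have "\<dots> \<le> KL V \<pi> P" using dkl_le_KL[OF assms AV] .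
      finally have "sum \<pi> A \<in> S" using ab S_def by simp
      then show ?thesis using cSup_upper[OF _ bdd] ab by force
    qed
  qed
  then show "sum \<pi> A - sum P A \<le> Sup {l. 0 \<le> l \<and> l \<le> 1 \<and>
                     dkl l (1 - Max (P ` V)) \<le> KL V \<pi> P}" using S_def q_def by simp
next
  fix C :: real and \<epsilon> :: real
  assume C: "C \<ge> 0" and e: "\<epsilon> > 0"
  define \<eta> where "\<eta> = min \<epsilon> (exp (-(C+2)/\<epsilon>))"
  have eta: "\<eta> > 0" "\<eta> \<le> \<epsilon>" "\<eta> \<le> exp (-(C+2)/\<epsilon>)" using e by (auto simp: \<eta>_def)
  show "\<exists>\<eta>>0. \<forall>Q \<rho> A. is_dist V Q \<and> 1 - Max (Q ` V) < \<eta> \<and> is_dist V \<rho> \<and>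
            KL V \<rho> Q \<le> ereal C \<and> A \<subseteq> V \<longrightarrow> sum \<rho> A - sum Q A \<le> \<epsilon>"
  proof (intro exI[of _ \<eta>] conjI allI impI eta(1))
    fix Q \<rho> A
    assume h: "is_dist V Q \<and> 1 - Max (Q ` V) < \<eta> \<and> is_dist V \<rho> \<and>
            KL V \<rho> Q \<le> ereal C \<and> A \<subseteq> V"
    then have Q: "is_dist V Q" and qe: "1 - Max (Q ` V) < \<eta>" and R: "is_dist V \<rho>"
      and KC: "KL V \<rho> Q \<le> ereal C" and AV: "A \<subseteq> V" by auto
    define a where "a = sum \<rho> A"
    define b where "b = sum Q A"
    have ab: "0 \<le> a" "a \<le> 1" "0 \<le> b" "b \<le> 1"
      using basic[OF R AV assms(1)] basic[OF Q AV assms(1)] a_def b_def by auto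
    have dk: "dkl a b \<le> ereal C" using dkl_le_KL[OF assms(1) Q R AV] KC a_def b_def by simp
    show "sum \<rho> A - sum Q A \<le> \<epsilon>"
    proof (rule key[OF assms(1) Q R AV])
      assume "sum \<rho> A - sum Q A \<le> 1 - Max (Q ` V)"
      then show ?thesis using qe eta by linarith
    next
      assume bq: "sum Q A \<le> 1 - Max (Q ` V)"
      show ?thesis
      proof (rule ccontr)
        assume "\<not> ?thesis"
        then have ae: "a > \<epsilon>" using ab a_def b_def by simp
        have bsmall: "b < exp (-(C+2)/\<epsilon>)" using bq qe eta b_def by linarith
        show False
        proof (cases "b = 0")
          case True
          then have "dkl a b = \<infinity>" using ae e ab
            by (simp add: dkl_def xlogxy_def)
          then show False using dk by simp
        next
          case bp: False
          then have bp: "b > 0" using ab by simp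
          have lnb: "ln b < -(C+2)/\<epsilon>" using bsmall bp
            by (metis exp_less_cancel_iff exp_ln)
          have t2: "xlogxy (1-a) (1-b) \<ge> ereal (-1)"
          proof (cases "a = 1")
            case True then show ?thesis by (simp add: xlogxy_def)
          next
            case False
            then have "1 - a > 0" using ab by simp
            moreover have "1 - b > 0" using ab ae e bsmall bq eta qe b_def by linarith
            ultimately have "(1-a) * ln ((1-a)/(1-b)) \<ge> (1-a) * (1 - (1-b)/(1-a))"
              using ln_ge_1m[of "(1-a)/(1-b)"] by (intro mult_left_mono) auto
            also have "(1-a) * (1 - (1-b)/(1-a)) = b - a" using \<open>1 - a > 0\<close> by (simp add: field_simps)
            finally show ?thesis using False \<open>1 - b > 0\<close> ab by (simp add: xlogxy_def)
          qed
          have apos: "a > 0" using ae e by simp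
          have "a * ln a \<ge> a * (1 - 1/a)" using ln_ge_1m[OF apos] apos by (intro mult_left_mono) auto
          moreover have "a * (1 - 1/a) = a - 1" using apos by (simp add: field_simps)
          ultimately have ala: "a * ln a \<ge> -1" using ab by linarith
          have "-(C+2) / \<epsilon> = - ((C+2)/\<epsilon>)" by (simp only: minus_divide_left)
          then have "-ln b > (C+2)/\<epsilon>" using lnb by simp
          then have "\<epsilon> * (-ln b) > C + 2" using e by (simp add: field_simps)
          moreover have "a * (-ln b) \<ge> \<epsilon> * (-ln b)"
            using ae ab bp ln_le_zero_iff[of b] by (intro mult_right_mono) auto
          ultimately have "a * ln (a/b) > C + 1" using ala apos bp by (simp add: ln_div algebra_simps)
          then have "xlogxy a b > ereal (C + 1)" using apos bp by (simp add: xlogxy_def)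
          then have "dkl a b > ereal C" using t2 unfolding dkl_def
            by (cases "xlogxy a b"; cases "xlogxy (1-a) (1-b)") auto
          then show False using dk by simp
        qed
      qed
    qed
  qed
qed

end
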